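(* Let $n\ge1$, $\vec p,\vec q\in[0,1]^n$, and $N=\{1,\dots,n\}$. For nonempty $A\subseteq N$ put $\bar p_A=|A|^{-1}\sum_{i\in A}p_i$, $\bar q_A=|A|^{-1}\sum_{i\in A}q_i$, and $$\delta_A=\mathrm{TV}\big(\mathrm{Bin}(|A|,\bar p_A),\mathrm{Bin}(|A|,\bar q_A)\big).$$ If $I,J$ form a partition of $N$ with $I,J\ne\emptyset$, then $\delta_N\le2(\delta_I+\delta_J)$.
   Context: $\mathrm{Bin}(m,\theta)$ is the binomial distribution; $\mathrm{TV}(P,Q)=\frac12\sum_\omega|P(\omega)-Q(\omega)|$ is the total variation distance. *)

theory Defs
  imports "HOL-Analysis.Analysis"
begin

definition bin_pmf :: "nat \<Rightarrow> real \<Rightarrow> nat \<Rightarrow> real" where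
  "bin_pmf m \<theta> k = real (m choose k) * \<theta> ^ k * (1 - \<theta>) ^ (m - k)"

definition tv_bin :: "nat \<Rightarrow> real \<Rightarrow> real \<Rightarrow> real" where
  "tv_bin m a b = (1/2) * (\<Sum>k\<in>{0..m}. \<bar>bin_pmf m a k - bin_pmf m b k\<bar>)"

definition avg :: "(nat \<Rightarrow> real) \<Rightarrow> nat set \<Rightarrow> real" where
  "avg p A = (\<Sum>i\<in>A. p i) / real (card A)"

definition delta :: "(nat \<Rightarrow> real) \<Rightarrow> (nat \<Rightarrow> real) \<Rightarrow> nat set \<Rightarrow> real" where
  "delta p q A = tv_bin (card A) (avg p A) (avg q A)"

end

theory Submission
  imports Defs "HOL-Computational_Algebra.Polynomial"
begin


definition lp :: "nat \<Rightarrow> real poly \<Rightarrow> real" where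
  "lp N P = (\<Sum>k\<le>N. \<bar>coeff P k\<bar>)"

definition bp :: "real \<Rightarrow> real poly" where
  "bp a = [:1 - a, a:]"

lemma degree_bp_pow: "degree (bp a ^ j) \<le> j"
proof -
  have "degree (bp a ^ j) \<le> degree (bp a) * j" by (rule degree_power_le)
  moreover have "degree (bp a) \<le> 1" unfolding bp_def by simp
  ultimately show ?thesis
    by (metis dual_order.trans mult.commute mult_le_cancel1 nat_mult_1_right)
qed

lemma coeff_bp: "coeff (bp a ^ j) k = bin_pmf j a k"
proof (cases "k \<le> j")
  case True
  then show ?thesis unfolding bp_def bin_pmf_def
    by (simp add: coeff_linear_poly_power)
next
  case False
  then have "coeff (bp a ^ j) k = 0"
    using degree_bp_pow[of a j] by (intro coeff_eq_0) simp
  then show ?thesis using False unfolding bin_pmf_def by simp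
qed

lemma lp_nonneg: "lp N P \<ge> 0" unfolding lp_def by (simp add: sum_nonneg)

lemma lp_add: "lp N (P + Q) \<le> lp N P + lp N Q"
  unfolding lp_def sum.distrib[symmetric] by (intro sum_mono) (simp add: abs_triangle_ineq)

lemma lp_diff: "lp N (P - Q) \<le> lp N P + lp N Q"
  unfolding lp_def sum.distrib[symmetric] by (intro sum_mono) (simp add: abs_triangle_ineq4)

lemma lp_smult: "lp N (smult c P) = \<bar>c\<bar> * lp N P"
  unfolding lp_def by (simp add: abs_mult sum_distrib_left)

lemma lp_sum: "lp N (\<Sum>j\<in>A. f j) \<le> (\<Sum>j\<in>A. lp N (f j))"
proof -
  have "lp N (\<Sum>j\<in>A. f j) = (\<Sum>k\<le>N. \<bar>\<Sum>j\<in>A. coeff (f j) k\<bar>)"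
    unfolding lp_def by (simp add: coeff_sum)
  also have "\<dots> \<le> (\<Sum>k\<le>N. \<Sum>j\<in>A. \<bar>coeff (f j) k\<bar>)"
    by (intro sum_mono sum_abs)
  also have "\<dots> = (\<Sum>j\<in>A. lp N (f j))"
    unfolding lp_def by (rule sum.swap)
  finally show ?thesis .
qed

lemma lp_mult: "lp N (P * Q) \<le> lp N P * lp N Q"
proof -
  have "lp N (P * Q) = (\<Sum>k\<le>N. \<bar>\<Sum>i\<le>k. coeff P i * coeff Q (k - i)\<bar>)"
    unfolding lp_def by (simp add: coeff_mult)
  also have "\<dots> \<le> (\<Sum>k\<le>N. \<Sum>i\<le>k. \<bar>coeff P i\<bar> * \<bar>coeff Q (k - i)\<bar>)"
  proof (intro sum_mono)
    fix k
    show "\<bar>\<Sum>i\<le>k. coeff P i * coeff Q (k - i)\<bar> \<le> (\<Sum>i\<le>k. \<bar>coeff P i\<bar> * \<bar>coeff Q (k - i)\<bar>)"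
      using sum_abs[of "\<lambda>i. coeff P i * coeff Q (k - i)" "{..k}"] by (simp add: abs_mult)
  qed
  also have "\<dots> = (\<Sum>(i,j)\<in>{(i,j). i + j \<le> N}. \<bar>coeff P i\<bar> * \<bar>coeff Q j\<bar>)"
    by (rule sum.triangle_reindex_eq[symmetric])
  also have "\<dots> \<le> (\<Sum>(i,j)\<in>{..N} \<times> {..N}. \<bar>coeff P i\<bar> * \<bar>coeff Q j\<bar>)"
    by (intro sum_mono2) auto
  also have "\<dots> = lp N P * lp N Q"
    unfolding lp_def sum_product sum.cartesian_product by simp
  finally show ?thesis .
qed

lemma lp_mono: "N \<le> M \<Longrightarrow> lp N P \<le> lp M P"
  unfolding lp_def by (intro sum_mono2) auto

lemma lp_deg: "degree P \<le> N \<Longrightarrow> N \<le> M \<Longrightarrow> lp M P = lp N P"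
  unfolding lp_def
  by (intro sum.mono_neutral_right) (auto intro: coeff_eq_0)

lemma sum_bin: "(\<Sum>k\<le>j. bin_pmf j a k) = 1"
  using binomial_ring[of a "1 - a" j] unfolding bin_pmf_def by (simp add: mult.assoc)

lemma lp_bp: assumes "0 \<le> a" "a \<le> 1" shows "lp N (bp a ^ j) \<le> 1"
proof -
  have "lp N (bp a ^ j) \<le> lp (N + j) (bp a ^ j)" by (rule lp_mono) simp
  also have "\<dots> = lp j (bp a ^ j)" by (rule lp_deg[OF degree_bp_pow]) simp
  also have "\<dots> = (\<Sum>k\<le>j. bin_pmf j a k)"
    unfolding lp_def coeff_bp using assms
    by (intro sum.cong refl) (simp add: bin_pmf_def)
  finally show ?thesis by (simp add: sum_bin)
qed


definition FF :: "real \<Rightarrow> real \<Rightarrow> nat \<Rightarrow> real" where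
  "FF a b j = lp j (bp a ^ j - bp b ^ j)"

lemma FF_tv: "FF a b j = 2 * tv_bin j a b"
  unfolding FF_def tv_bin_def lp_def by (simp add: coeff_bp atLeast0AtMost)

lemma FF_nonneg: "FF a b j \<ge> 0" unfolding FF_def by (rule lp_nonneg)

lemma degree_bp_diff: "degree (bp a ^ j - bp b ^ j) \<le> j"
  by (meson degree_bp_pow degree_diff_le)

lemma lp_FF: "j \<le> N \<Longrightarrow> lp N (bp a ^ j - bp b ^ j) = FF a b j"
  unfolding FF_def by (rule lp_deg[OF degree_bp_diff])

lemma FF_sub:
  assumes "0 \<le> a" "a \<le> 1" "0 \<le> b" "b \<le> 1"
  shows "FF a b (j + l) \<le> FF a b j + FF a b l"
proof -
  have eq: "bp a ^ (j + l) - bp b ^ (j + l) =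
      (bp a ^ j - bp b ^ j) * bp a ^ l + bp b ^ j * (bp a ^ l - bp b ^ l)"
    by (simp add: power_add algebra_simps)
  have "FF a b (j + l) \<le> lp (j+l) ((bp a ^ j - bp b ^ j) * bp a ^ l)
        + lp (j+l) (bp b ^ j * (bp a ^ l - bp b ^ l))"
    unfolding FF_def eq by (rule lp_add)
  also have "\<dots> \<le> lp (j+l) (bp a ^ j - bp b ^ j) * lp (j+l) (bp a ^ l)
        + lp (j+l) (bp b ^ j) * lp (j+l) (bp a ^ l - bp b ^ l)"
    by (intro add_mono lp_mult)
  also have "\<dots> \<le> FF a b j * 1 + 1 * FF a b l"
    using lp_FF[of j "j+l" a b] lp_FF[of l "j+l" a b] lp_bp[OF assms(1,2), of "j+l" l]
      lp_bp[OF assms(3,4), of "j+l" j] FF_nonneg[of a b j] FF_nonneg[of a b l] lp_nonneg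
    by (intro add_mono mult_mono) auto
  finally show ?thesis by simp
qed

lemma bin_thin:
  assumes "k \<le> j"
  shows "bin_pmf j a k = ((real j + 1 - real k) / (real j + 1)) * bin_pmf (Suc j) a k
     + ((real k + 1) / (real j + 1)) * bin_pmf (Suc j) a (Suc k)"
proof -
  have c1: "real (Suc j choose Suc k) * (real k + 1) = (real j + 1) * real (j choose k)"
    using Suc_times_binomial[of k j] by (metis of_nat_Suc of_nat_mult mult.commute add.commute)
  have c2: "real (Suc j choose k) * (real j + 1 - real k) = (real j + 1) * real (j choose k)"
  proof -
    have "(Suc j - k) * (Suc j choose k) = Suc j * (j choose k)"
      using binomial_absorb_comp[of "Suc j" k] by simp
    then have "real (Suc j - k) * real (Suc j choose k) = (real j + 1) * real (j choose k)"
      by (metis of_nat_Suc of_nat_mult add.commute)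
    moreover have "real (Suc j - k) = real j + 1 - real k" using assms by simp
    ultimately show ?thesis by (simp add: mult.commute)
  qed
  have p1: "(1 - a) ^ (Suc j - k) = (1 - a) * (1 - a) ^ (j - k)"
    using assms by (simp add: Suc_diff_le)
  have "((real j + 1 - real k) / (real j + 1)) * bin_pmf (Suc j) a k
     + ((real k + 1) / (real j + 1)) * bin_pmf (Suc j) a (Suc k)
     = (real (Suc j choose k) * (real j + 1 - real k)) / (real j + 1) * a ^ k * (1 - a) ^ (Suc j - k)
     + (real (Suc j choose Suc k) * (real k + 1)) / (real j + 1) * a ^ Suc k * (1 - a) ^ (j - k)"
    unfolding bin_pmf_def by (simp add: field_simps)
  also have "\<dots> = ((real j + 1) * real (j choose k)) / (real j + 1) * a ^ k * ((1 - a) * (1 - a) ^ (j - k))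
     + ((real j + 1) * real (j choose k)) / (real j + 1) * a ^ Suc k * (1 - a) ^ (j - k)"
    by (simp only: c1 c2 p1)
  also have "\<dots> = real (j choose k) * a ^ k * ((1 - a) * (1 - a) ^ (j - k))
     + real (j choose k) * a ^ Suc k * (1 - a) ^ (j - k)"
  proof -
    have nz: "real j + 1 \<noteq> 0" by (simp add: add_nonneg_eq_0_iff)
    show ?thesis by (simp only: nonzero_mult_div_cancel_left[OF nz])
  qed
  also have "\<dots> = real (j choose k) * a ^ k * (1 - a) ^ (j - k) * ((1 - a) + a)"
    by (simp add: algebra_simps)
  finally show ?thesis unfolding bin_pmf_def by simp
qed

lemma FF_mono1:
  assumes "0 \<le> a" "a \<le> 1" "0 \<le> b" "b \<le> 1"
  shows "FF a b j \<le> FF a b (Suc j)"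
proof -
  define d where "d k = bin_pmf (Suc j) a k - bin_pmf (Suc j) b k" for k
  define al where "al k = (real j + 1 - real k) / (real j + 1)" for k
  define be where "be k = real k / (real j + 1)" for k
  have "FF a b j = (\<Sum>k\<le>j. \<bar>bin_pmf j a k - bin_pmf j b k\<bar>)"
    unfolding FF_def lp_def by (simp add: coeff_bp)
  also have "\<dots> = (\<Sum>k\<le>j. \<bar>al k * d k + be (Suc k) * d (Suc k)\<bar>)"
  proof (intro sum.cong refl)
    fix k assume k: "k \<in> {..j}"
    have be: "be (Suc k) = (real k + 1) / (real j + 1)" by (simp add: be_def)
    have "bin_pmf j a k - bin_pmf j b k
       = (al k * bin_pmf (Suc j) a k + be (Suc k) * bin_pmf (Suc j) a (Suc k))
       - (al k * bin_pmf (Suc j) b k + be (Suc k) * bin_pmf (Suc j) b (Suc k))"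
      using bin_thin[of k j a] bin_thin[of k j b] k unfolding be al_def by simp
    also have "\<dots> = al k * d k + be (Suc k) * d (Suc k)"
      unfolding d_def by (simp only: right_diff_distrib diff_add_eq add_diff_eq diff_diff_eq2 algebra_simps)
    finally show "\<bar>bin_pmf j a k - bin_pmf j b k\<bar> = \<bar>al k * d k + be (Suc k) * d (Suc k)\<bar>" by simp
  qed
  also have "\<dots> \<le> (\<Sum>k\<le>j. al k * \<bar>d k\<bar> + be (Suc k) * \<bar>d (Suc k)\<bar>)"
  proof (intro sum_mono)
    fix k assume "k \<in> {..j}"
    then have "al k \<ge> 0" "be (Suc k) \<ge> 0" unfolding al_def be_def by auto
    then show "\<bar>al k * d k + be (Suc k) * d (Suc k)\<bar> \<le> al k * \<bar>d k\<bar> + be (Suc k) * \<bar>d (Suc k)\<bar>"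
      by (metis abs_mult abs_of_nonneg abs_triangle_ineq)
  qed
  also have "\<dots> = (\<Sum>k\<le>j. al k * \<bar>d k\<bar>) + (\<Sum>k\<le>j. be (Suc k) * \<bar>d (Suc k)\<bar>)"
    by (rule sum.distrib)
  also have "(\<Sum>k\<le>j. al k * \<bar>d k\<bar>) = (\<Sum>k\<le>Suc j. al k * \<bar>d k\<bar>)"
    by (simp add: al_def)
  also have "(\<Sum>k\<le>j. be (Suc k) * \<bar>d (Suc k)\<bar>) = (\<Sum>k\<le>Suc j. be k * \<bar>d k\<bar>)"
    by (subst sum.atMost_Suc_shift) (simp add: be_def)
  also have "(\<Sum>k\<le>Suc j. al k * \<bar>d k\<bar>) + (\<Sum>k\<le>Suc j. be k * \<bar>d k\<bar>) = (\<Sum>k\<le>Suc j. \<bar>d k\<bar>)"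
    unfolding sum.distrib[symmetric]
  proof (intro sum.cong refl)
    fix k
    have nz: "real j + 1 \<noteq> 0" by (simp add: add_nonneg_eq_0_iff)
    have "al k + be k = 1" unfolding al_def be_def
      by (simp add: add_divide_distrib[symmetric] nz)
    then show "al k * \<bar>d k\<bar> + be k * \<bar>d k\<bar> = \<bar>d k\<bar>"
      by (metis distrib_right mult_1)
  qed
  also have "\<dots> = FF a b (Suc j)"
    unfolding FF_def lp_def d_def coeff_diff coeff_bp by (rule refl)
  finally show ?thesis .
qed

lemma FF_mono:
  assumes "0 \<le> a" "a \<le> 1" "0 \<le> b" "b \<le> 1" "j \<le> j'"
  shows "FF a b j \<le> FF a b j'"
  using assms(5)
proof (induction j' rule: dec_induct)
  case base then show ?case by simp
next
  case (step i) then show ?case using FF_mono1[OF assms(1-4), of i] by simp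
qed

lemma FF_mult:
  assumes "0 \<le> a" "a \<le> 1" "0 \<le> b" "b \<le> 1"
  shows "FF a b (q * m) \<le> real q * FF a b m"
proof (induction q)
  case 0 then show ?case by (simp add: FF_def lp_def)
next
  case (Suc q)
  have "FF a b (Suc q * m) = FF a b (m + q * m)" by simp
  also have "\<dots> \<le> FF a b m + FF a b (q * m)" by (rule FF_sub[OF assms])
  also have "\<dots> \<le> FF a b m + real q * FF a b m" using Suc by simp
  finally show ?case by (simp add: algebra_simps)
qed

lemma FF_bound:
  assumes "0 \<le> a" "a \<le> 1" "0 \<le> b" "b \<le> 1" "m \<ge> 1"
  shows "FF a b j \<le> (real j / real m + 1) * FF a b m"
proof -
  have "j \<le> (j div m + 1) * m"
    using assms(5) by (metis div_mult_mod_eq add.commute add_le_cancel_left distrib_right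
        less_imp_le_nat mod_less_divisor mult_1 not_one_le_zero neq0_conv)
  then have "FF a b j \<le> FF a b ((j div m + 1) * m)" by (rule FF_mono[OF assms(1-4)])
  also have "\<dots> \<le> real (j div m + 1) * FF a b m" by (rule FF_mult[OF assms(1-4)])
  also have "\<dots> \<le> (real j / real m + 1) * FF a b m"
  proof (intro mult_right_mono FF_nonneg)
    have "real (j div m) * real m \<le> real j"
      by (metis div_times_less_eq_dividend of_nat_le_iff of_nat_mult)
    then have "real (j div m) \<le> real j / real m" using assms(5) by (simp add: field_simps)
    then show "real (j div m + 1) \<le> real j / real m + 1" by simp
  qed
  finally show ?thesis .
qed



lemma const_mult_poly: "[:c:] * p = smult c (p :: real poly)"
  by (metis mult_smult_left smult_one mult_1)

lemma bin_mean: "(\<Sum>k\<le>n. real (n choose k) * l ^ k * (1 - l) ^ (n - k) * real k) = real n * l"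
proof (cases n)
  case 0 then show ?thesis by simp
next
  case (Suc n')
  have "(\<Sum>k\<le>n. real (n choose k) * l ^ k * (1 - l) ^ (n - k) * real k)
      = (\<Sum>i\<le>n'. real (Suc n' choose Suc i) * l ^ Suc i * (1 - l) ^ (n' - i) * real (Suc i))"
    unfolding Suc by (subst sum.atMost_Suc_shift) simp
  also have "\<dots> = (\<Sum>i\<le>n'. (real (Suc n') * l) * (real (n' choose i) * l ^ i * (1 - l) ^ (n' - i)))"
  proof (intro sum.cong refl)
    fix i
    have "real (Suc n' choose Suc i) * real (Suc i) = real (Suc n') * real (n' choose i)"
      using Suc_times_binomial[of i n'] by (metis of_nat_mult mult.commute)
    note e = this
    show "real (Suc n' choose Suc i) * l ^ Suc i * (1 - l) ^ (n' - i) * real (Suc i)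
      = (real (Suc n') * l) * (real (n' choose i) * l ^ i * (1 - l) ^ (n' - i))"
    proof -
      have "real (Suc n' choose Suc i) * l ^ Suc i * (1 - l) ^ (n' - i) * real (Suc i)
        = (real (Suc n' choose Suc i) * real (Suc i)) * (l * (l ^ i * (1 - l) ^ (n' - i)))"
        by (simp only: power_Suc mult_ac)
      also have "\<dots> = (real (Suc n') * real (n' choose i)) * (l * (l ^ i * (1 - l) ^ (n' - i)))"
        by (simp only: e)
      finally show ?thesis by (simp only: mult_ac)
    qed
  qed
  also have "\<dots> = real (Suc n') * l * (\<Sum>i\<le>n'. bin_pmf n' l i)"
    unfolding bin_pmf_def sum_distrib_left by simp
  also have "\<dots> = real n * l" using Suc by (simp add: sum_bin)
  finally show ?thesis .
qed

lemma bin_total: "(\<Sum>k\<le>n. real (n choose k) * l ^ k * (1 - l) ^ (n - k)) = 1"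
  using sum_bin[of n l] unfolding bin_pmf_def by simp

lemma mix:
  assumes "0 \<le> a" "a \<le> 1" "0 \<le> b" "b \<le> 1" "0 \<le> c" "c \<le> 1"
    and "1 \<le> m" "m \<le> n" and l: "l = real m / real n"
  shows "lp n (bp (l * a + (1 - l) * c) ^ n - bp (l * b + (1 - l) * c) ^ n) \<le> 2 * FF a b m"
proof -
  have n: "real n > 0" using assms(7,8) by simp
  have l0: "0 \<le> l" and l1: "l \<le> 1" using assms(7,8) n unfolding l by (auto simp: field_simps)
  define w where "w k = real (n choose k) * l ^ k * (1 - l) ^ (n - k)" for k
  have w0: "w k \<ge> 0" for k unfolding w_def using l0 l1 by simp
  have expand: "bp (l * x + (1 - l) * c) ^ n = (\<Sum>k\<le>n. smult (w k) (bp x ^ k * bp c ^ (n - k)))" for x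
  proof -
    have "bp (l * x + (1 - l) * c) = smult l (bp x) + smult (1 - l) (bp c)"
      unfolding bp_def by (simp add: algebra_simps)
    then have "bp (l * x + (1 - l) * c) ^ n
      = (\<Sum>k\<le>n. of_nat (n choose k) * smult l (bp x) ^ k * smult (1 - l) (bp c) ^ (n - k))"
      by (simp add: binomial_ring)
    also have "\<dots> = (\<Sum>k\<le>n. smult (w k) (bp x ^ k * bp c ^ (n - k)))"
      unfolding w_def
      by (intro sum.cong refl) (simp add: smult_power of_nat_poly const_mult_poly mult_smult_left mult_smult_right mult_ac)
    finally show ?thesis .
  qed
  have "bp (l * a + (1 - l) * c) ^ n - bp (l * b + (1 - l) * c) ^ n
     = (\<Sum>k\<le>n. smult (w k) ((bp a ^ k - bp b ^ k) * bp c ^ (n - k)))"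
    unfolding expand sum_subtractf[symmetric]
    by (intro sum.cong refl) (simp add: smult_diff_right left_diff_distrib)
  then have "lp n (bp (l * a + (1 - l) * c) ^ n - bp (l * b + (1 - l) * c) ^ n)
     \<le> (\<Sum>k\<le>n. lp n (smult (w k) ((bp a ^ k - bp b ^ k) * bp c ^ (n - k))))"
    using lp_sum by simp
  also have "\<dots> \<le> (\<Sum>k\<le>n. w k * ((real k / real m + 1) * FF a b m))"
  proof (intro sum_mono)
    fix k assume k: "k \<in> {..n}"
    have "lp n ((bp a ^ k - bp b ^ k) * bp c ^ (n - k)) \<le> lp n (bp a ^ k - bp b ^ k) * lp n (bp c ^ (n - k))"
      by (rule lp_mult)
    also have "\<dots> \<le> FF a b k * 1"
      using k lp_FF[of k n a b] lp_bp[OF assms(5,6), of n "n - k"] FF_nonneg[of a b k]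
      by (simp add: mult_left_le)
    also have "\<dots> \<le> (real k / real m + 1) * FF a b m"
      using FF_bound[OF assms(1-4,7)] by simp
    finally show "lp n (smult (w k) ((bp a ^ k - bp b ^ k) * bp c ^ (n - k)))
        \<le> w k * ((real k / real m + 1) * FF a b m)"
      unfolding lp_smult using w0[of k] by (simp add: mult_left_mono)
  qed
  also have "\<dots> = FF a b m * ((\<Sum>k\<le>n. w k * real k) / real m + (\<Sum>k\<le>n. w k))"
    by (simp add: sum_distrib_left sum_distrib_right sum_divide_distrib algebra_simps sum.distrib)
  also have "\<dots> = FF a b m * (real n * l / real m + 1)"
    unfolding w_def bin_mean bin_total by simp
  also have "\<dots> = 2 * FF a b m"
    using n assms(7) unfolding l by simp
  finally show ?thesis .
qed



lemma avg_01:
  assumes "finite A" "A \<noteq> {}" "\<And>i. i \<in> A \<Longrightarrow> 0 \<le> p i \<and> p i \<le> 1"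
  shows "0 \<le> avg p A" "avg p A \<le> 1"
proof -
  have c: "real (card A) > 0" using assms(1,2) by (simp add: card_gt_0_iff)
  have "0 \<le> sum p A" using assms(3) by (simp add: sum_nonneg)
  then show "0 \<le> avg p A" unfolding avg_def using c by simp
  have "sum p A \<le> real (card A) * 1" using assms(3) by (intro sum_bounded_above) auto
  then show "avg p A \<le> 1" unfolding avg_def using c by (simp add: field_simps)
qed

lemma avg_split:
  assumes "finite I" "finite J" "I \<inter> J = {}" "I \<noteq> {}" "J \<noteq> {}"
  shows "avg p (I \<union> J) = (real (card I) / real (card (I \<union> J))) * avg p I
     + (1 - real (card I) / real (card (I \<union> J))) * avg p J"
proof -
  have cI: "real (card I) > 0" and cJ: "real (card J) > 0"
    using assms by (simp_all add: card_gt_0_iff)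
  have cU: "card (I \<union> J) = card I + card J" using assms by (simp add: card_Un_disjoint)
  have sU: "sum p (I \<union> J) = sum p I + sum p J" using assms by (simp add: sum.union_disjoint)
  define M where "M = real (card I)"
  define K where "K = real (card J)"
  have M: "M > 0" and K: "K > 0" using cI cJ unfolding M_def K_def by auto
  have e1: "M / (M + K) * (sum p I / M) = sum p I / (M + K)" using M by simp
  have e2: "1 - M / (M + K) = K / (M + K)" using M K by (simp add: field_simps)
  have e3: "K / (M + K) * (sum p J / K) = sum p J / (M + K)" using K by simp
  have "avg p (I \<union> J) = (sum p I + sum p J) / (M + K)"
    unfolding avg_def cU sU M_def K_def by simp
  also have "\<dots> = M / (M + K) * (sum p I / M) + (1 - M / (M + K)) * (sum p J / K)"
    unfolding e1 e2 e3 by (simp add: add_divide_distrib)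
  finally show ?thesis unfolding avg_def cU M_def K_def by simp
qed

theorem lemma4:
  fixes n :: nat and p q :: "nat \<Rightarrow> real" and I J :: "nat set"
  assumes "n \<ge> 1"
    and "\<And>i. i \<in> {1..n} \<Longrightarrow> 0 \<le> p i \<and> p i \<le> 1"
    and "\<And>i. i \<in> {1..n} \<Longrightarrow> 0 \<le> q i \<and> q i \<le> 1"
    and "I \<union> J = {1..n}" and "I \<inter> J = {}"
    and "I \<noteq> {}" and "J \<noteq> {}"
  shows "delta p q {1..n} \<le> 2 * (delta p q I + delta p q J)"
proof -
  have fI: "finite I" and fJ: "finite J" using assms(4) finite_subset
    by (metis finite_Un finite_atLeastAtMost)+
  define m where "m = card I"
  define k where "k = card J"
  have cn: "card (I \<union> J) = n" unfolding assms(4) by simp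
  have nmk: "n = m + k" using cn fI fJ assms(5) unfolding m_def k_def by (simp add: card_Un_disjoint)
  have m1: "1 \<le> m" and k1: "1 \<le> k" using fI fJ assms(6,7) unfolding m_def k_def
    by (simp_all add: Suc_le_eq card_gt_0_iff)
  define a where "a = avg p I"
  define b where "b = avg q I"
  define c where "c = avg p J"
  define d where "d = avg q J"
  have pI: "\<And>i. i \<in> I \<Longrightarrow> 0 \<le> p i \<and> p i \<le> 1" "\<And>i. i \<in> J \<Longrightarrow> 0 \<le> p i \<and> p i \<le> 1"
    "\<And>i. i \<in> I \<Longrightarrow> 0 \<le> q i \<and> q i \<le> 1" "\<And>i. i \<in> J \<Longrightarrow> 0 \<le> q i \<and> q i \<le> 1"
    using assms(2,3,4) by blast+
  have a01: "0 \<le> a" "a \<le> 1" unfolding a_def using avg_01[OF fI assms(6) pI(1)] by auto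
  have b01: "0 \<le> b" "b \<le> 1" unfolding b_def using avg_01[OF fI assms(6) pI(3)] by auto
  have c01: "0 \<le> c" "c \<le> 1" unfolding c_def using avg_01[OF fJ assms(7) pI(2)] by auto
  have d01: "0 \<le> d" "d \<le> 1" unfolding d_def using avg_01[OF fJ assms(7) pI(4)] by auto
  define l where "l = real m / real n"
  define mu where "mu = real k / real n"
  have n0: "real n > 0" using assms(1) by simp
  have lmu: "1 - l = mu" "1 - mu = l" unfolding l_def mu_def nmk using n0 nmk
    by (simp_all add: field_simps)
  have x: "avg p {1..n} = l * a + (1 - l) * c"
    unfolding a_def c_def l_def m_def assms(4)[symmetric]
    using avg_split[OF fI fJ assms(5-7)] cn by simp
  have y: "avg q {1..n} = l * b + (1 - l) * d"
    unfolding b_def d_def l_def m_def assms(4)[symmetric]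
    using avg_split[OF fI fJ assms(5-7)] cn by simp
  define z where "z = l * b + (1 - l) * c"
  have z2: "z = mu * c + (1 - mu) * b" unfolding z_def lmu(1) lmu(2) by (simp add: add.commute)
  have y2: "l * b + (1 - l) * d = mu * d + (1 - mu) * b" unfolding lmu(1) lmu(2) by (simp add: add.commute)
  have cardN: "card {1..n} = n" by simp
  have "2 * delta p q {1..n} = lp n (bp (l * a + (1 - l) * c) ^ n - bp (l * b + (1 - l) * d) ^ n)"
    unfolding delta_def cardN x y FF_tv[symmetric] FF_def by simp
  also have "\<dots> = lp n ((bp (l * a + (1 - l) * c) ^ n - bp z ^ n) + (bp z ^ n - bp (l * b + (1 - l) * d) ^ n))"
    by simp
  also have "\<dots> \<le> lp n (bp (l * a + (1 - l) * c) ^ n - bp z ^ n) + lp n (bp z ^ n - bp (l * b + (1 - l) * d) ^ n)"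
    by (rule lp_add)
  also have "\<dots> \<le> 2 * FF a b m + 2 * FF c d k"
  proof (rule add_mono)
    show "lp n (bp (l * a + (1 - l) * c) ^ n - bp z ^ n) \<le> 2 * FF a b m"
      unfolding z_def by (rule mix[OF a01 b01 c01 m1 _ l_def]) (simp add: nmk)
    show "lp n (bp z ^ n - bp (l * b + (1 - l) * d) ^ n) \<le> 2 * FF c d k"
      unfolding z2 y2 by (rule mix[OF c01 d01 b01 k1 _ mu_def]) (simp add: nmk)
  qed
  also have "\<dots> = 4 * delta p q I + 4 * delta p q J"
    unfolding delta_def FF_tv m_def k_def a_def b_def c_def d_def by simp
  finally show ?thesis by simp
qed


end
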